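(* Let $k$ be a field of characteristic zero and $R$ an integral domain that is a $k$-algebra, endowed with a nonzero $k$-linear derivation $\delta$. Then there is a Poisson bracket $\{-,-\}$ on the polynomial ring $R[t]$ such that (1) the Poisson centre $\{z\in\operatorname{Frac}(R[t]):\{z,-\}\equiv0\}$ of $\operatorname{Frac}(R[t])$ equals the field of constants $\{f\in\operatorname{Frac}(R):\delta(f)=0\}$ of $(\operatorname{Frac}(R),\delta)$; and (2) if $P$ is a prime differential ideal of $R$ (i.e. $\delta(P)\subseteq P$), then $PR[t]$ is a Poisson prime ideal of $R[t]$.
   Context: A Poisson bracket on a commutative $k$-algebra is a $k$-bilinear Lie bracket such that $\{-,x\}$ is a derivation for each $x$; it extends uniquely to the fraction field. A Poisson prime ideal is a prime ideal $Q$ with $\{Q,R[t]\}\subseteq Q$. $\delta$ is extended to $\operatorname{Frac}(R)$ by the quotient rule. *)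

theory Defs
  imports "HOL-Computational_Algebra.Polynomial" "HOL-Computational_Algebra.Fraction_Field"
begin

text \<open>The ground field k is represented by its (isomorphic) image K inside R,
  a subfield of the integral domain R.\<close>
definition is_subfield :: "'a::idom set \<Rightarrow> bool" where
  "is_subfield K \<longleftrightarrow> 0 \<in> K \<and> 1 \<in> K \<and>
     (\<forall>x\<in>K. \<forall>y\<in>K. x + y \<in> K \<and> x * y \<in> K \<and> - x \<in> K) \<and>
     (\<forall>x\<in>K. x \<noteq> 0 \<longrightarrow> (\<exists>y\<in>K. x * y = 1))"

definition is_K_derivation :: "'a::idom set \<Rightarrow> ('a \<Rightarrow> 'a) \<Rightarrow> bool" where
  "is_K_derivation K d \<longleftrightarrow>
     (\<forall>x y. d (x + y) = d x + d y) \<and>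
     (\<forall>c\<in>K. \<forall>x. d (c * x) = c * d x) \<and>
     (\<forall>x y. d (x * y) = x * d y + y * d x)"

definition is_ideal :: "'a::comm_ring_1 set \<Rightarrow> bool" where
  "is_ideal I \<longleftrightarrow> 0 \<in> I \<and> (\<forall>x\<in>I. \<forall>y\<in>I. x + y \<in> I) \<and> (\<forall>x\<in>I. \<forall>r. r * x \<in> I)"

definition is_prime_ideal :: "'a::comm_ring_1 set \<Rightarrow> bool" where
  "is_prime_ideal P \<longleftrightarrow> is_ideal P \<and> P \<noteq> UNIV \<and>
     (\<forall>x y. x * y \<in> P \<longrightarrow> x \<in> P \<or> y \<in> P)"

definition ideal_generated :: "'a::comm_ring_1 set \<Rightarrow> 'a set" where
  "ideal_generated S = \<Inter>{I. is_ideal I \<and> S \<subseteq> I}"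

definition ext_ideal :: "'a::comm_ring_1 set \<Rightarrow> 'a poly set" where
  "ext_ideal P = ideal_generated ((\<lambda>a. [:a:]) ` P)"

definition is_poisson_bracket :: "'a::idom set \<Rightarrow> ('a poly \<Rightarrow> 'a poly \<Rightarrow> 'a poly) \<Rightarrow> bool" where
  "is_poisson_bracket K B \<longleftrightarrow>
     (\<forall>x y z. B (x + y) z = B x z + B y z) \<and>
     (\<forall>x y z. B x (y + z) = B x y + B x z) \<and>
     (\<forall>c\<in>K. \<forall>x y. B (smult c x) y = smult c (B x y) \<and> B x (smult c y) = smult c (B x y)) \<and>
     (\<forall>x. B x x = 0) \<and>
     (\<forall>x y z. B x (B y z) + B y (B z x) + B z (B x y) = 0) \<and>
     (\<forall>x y z. B (x * y) z = x * B y z + y * B x z)"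

text \<open>Extension of the bracket to Frac(R[t]) by the quotient rule.\<close>
definition frac_bracket ::
  "('a::idom poly \<Rightarrow> 'a poly \<Rightarrow> 'a poly) \<Rightarrow> 'a poly fract \<Rightarrow> 'a poly fract \<Rightarrow> 'a poly fract" where
  "frac_bracket B z w = (SOME v. \<exists>a b c d. b \<noteq> 0 \<and> d \<noteq> 0 \<and> z = Fract a b \<and> w = Fract c d \<and>
      v = Fract ((B a c * b - a * B b c) * d - c * (B a d * b - a * B b d)) (b^2 * d^2))"

definition poisson_centre :: "('a::idom poly \<Rightarrow> 'a poly \<Rightarrow> 'a poly) \<Rightarrow> 'a poly fract set" where
  "poisson_centre B = {z. \<forall>w. frac_bracket B z w = 0}"

definition frac_deriv :: "('a::idom \<Rightarrow> 'a) \<Rightarrow> 'a fract \<Rightarrow> 'a fract" where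
  "frac_deriv d z = (SOME v. \<exists>a b. b \<noteq> 0 \<and> z = Fract a b \<and> v = Fract (d a * b - a * d b) (b^2))"

definition frac_embed :: "'a::idom fract \<Rightarrow> 'a poly fract" where
  "frac_embed z = (SOME v. \<exists>a b. b \<noteq> 0 \<and> z = Fract a b \<and> v = Fract [:a:] [:b:])"

definition is_poisson_prime :: "('a::idom poly \<Rightarrow> 'a poly \<Rightarrow> 'a poly) \<Rightarrow> 'a poly set \<Rightarrow> bool" where
  "is_poisson_prime B Q \<longleftrightarrow> is_prime_ideal Q \<and> (\<forall>q\<in>Q. \<forall>r. B q r \<in> Q)"

end

theory Submission
  imports Defs
begin

definition der :: "('b::comm_ring_1 \<Rightarrow> 'b) \<Rightarrow> bool" where
  "der d \<longleftrightarrow> (\<forall>x y. d (x + y) = d x + d y) \<and> (\<forall>x y. d (x * y) = x * d y + y * d x)"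

lemma der_wd:
  fixes d :: "'b::idom \<Rightarrow> 'b"
  assumes "der d" "b \<noteq> 0" "b2 \<noteq> 0" "Fract a b = Fract a2 b2"
  shows "Fract (d a * b - a * d b) (b^2) = Fract (d a2 * b2 - a2 * d b2) (b2^2)"
proof -
  have e1: "a * b2 = a2 * b" using assms eq_fract by auto
  have "d (a * b2) = d (a2 * b)" using e1 by simp
  hence e2: "a * d b2 + b2 * d a = a2 * d b + b * d a2" using assms(1) unfolding der_def by simp
  have "(d a * b - a * d b) * b2^2 = (d a2 * b2 - a2 * d b2) * b^2"
    using e1 e2 by algebra
  thus ?thesis using assms by (simp add: eq_fract)
qed

lemma frac_deriv_Fract:
  fixes d :: "'b::idom \<Rightarrow> 'b"
  assumes "der d" "b \<noteq> 0"
  shows "frac_deriv d (Fract a b) = Fract (d a * b - a * d b) (b^2)"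
  unfolding frac_deriv_def
proof (rule someI2_ex)
  show "\<exists>v a' b'. b' \<noteq> 0 \<and> Fract a b = Fract a' b' \<and> v = Fract (d a' * b' - a' * d b') (b'^2)"
    using assms by blast
next
  fix v assume "\<exists>a' b'. b' \<noteq> 0 \<and> Fract a b = Fract a' b' \<and> v = Fract (d a' * b' - a' * d b') (b'^2)"
  then obtain a' b' where "b' \<noteq> 0" "Fract a b = Fract a' b'" "v = Fract (d a' * b' - a' * d b') (b'^2)" by blast
  thus "v = Fract (d a * b - a * d b) (b^2)" using der_wd[OF assms(1) assms(2)] by metis
qed

lemma frac_bracket_eq:
  fixes X Y :: "'b::idom poly \<Rightarrow> 'b poly"
  assumes "der X" "der Y" "\<And>f g. B f g = X f * Y g - Y f * X g"
  shows "frac_bracket B z w = frac_deriv X z * frac_deriv Y w - frac_deriv Y z * frac_deriv X w"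
  unfolding frac_bracket_def
proof (rule someI2_ex)
  obtain a b where "z = Fract a b" "b \<noteq> 0" by (cases z)
  moreover obtain c d where "w = Fract c d" "d \<noteq> 0" by (cases w)
  ultimately show "\<exists>v a b c d. b \<noteq> 0 \<and> d \<noteq> 0 \<and> z = Fract a b \<and> w = Fract c d \<and>
      v = Fract ((B a c * b - a * B b c) * d - c * (B a d * b - a * B b d)) (b^2 * d^2)" by blast
next
  fix v assume "\<exists>a b c d. b \<noteq> 0 \<and> d \<noteq> 0 \<and> z = Fract a b \<and> w = Fract c d \<and>
      v = Fract ((B a c * b - a * B b c) * d - c * (B a d * b - a * B b d)) (b^2 * d^2)"
  then obtain a b c d where h: "b \<noteq> 0" "d \<noteq> 0" "z = Fract a b" "w = Fract c d"
     "v = Fract ((B a c * b - a * B b c) * d - c * (B a d * b - a * B b d)) (b^2 * d^2)" by blast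
  have "Fract ((B a c * b - a * B b c) * d - c * (B a d * b - a * B b d)) (b^2 * d^2)
     = Fract (X a * b - a * X b) (b^2) * Fract (Y c * d - c * Y d) (d^2)
       - Fract (Y a * b - a * Y b) (b^2) * Fract (X c * d - c * X d) (d^2)"
    using h(1,2) by (simp add: eq_fract assms(3)) algebra
  thus "v = frac_deriv X z * frac_deriv Y w - frac_deriv Y z * frac_deriv X w"
    using h by (simp add: frac_deriv_Fract assms)
qed

lemma der_diff: assumes "der d" shows "d (x - y) = d x - d y"
proof -
  have "d (x - y) + d y = d x" using assms unfolding der_def by (metis diff_add_cancel)
  thus ?thesis by (simp add: eq_diff_eq)
qed

lemma jacobi:
  fixes X Y :: "'b::comm_ring_1 \<Rightarrow> 'b"
  assumes "der X" "der Y" "\<And>f. Y (X f) = X (Y f)" "\<And>f g. B f g = X f * Y g - Y f * X g"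
  shows "B x (B y z) + B y (B z x) + B z (B x y) = 0"
proof -
  have a: "X (f + g) = X f + X g" "X (f * g) = f * X g + g * X f"
          "Y (f + g) = Y f + Y g" "Y (f * g) = f * Y g + g * Y f" for f g
    using assms(1,2) unfolding der_def by auto
  show ?thesis
    by (simp add: assms(4) der_diff[OF assms(1)] der_diff[OF assms(2)] a assms(3) algebra_simps)
qed


definition Dp :: "('a::idom \<Rightarrow> 'a) \<Rightarrow> 'a poly \<Rightarrow> 'a poly" where
  "Dp d p = map_poly d p"

definition Br :: "('a::idom \<Rightarrow> 'a) \<Rightarrow> 'a poly \<Rightarrow> 'a poly \<Rightarrow> 'a poly" where
  "Br d f g = pderiv f * Dp d g - Dp d f * pderiv g"

lemma der_pderiv: "der (pderiv :: 'a::idom poly \<Rightarrow> _)"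
  unfolding der_def by (simp add: pderiv_add pderiv_mult)

lemma KD_zero: assumes "is_K_derivation K d" shows "d 0 = 0"
proof -
  have "d (0 + 0) = d 0 + d 0" using assms unfolding is_K_derivation_def by blast
  thus ?thesis by (metis add.right_neutral add_left_cancel)
qed

lemma KD_one: assumes "is_K_derivation K (d::'a::idom \<Rightarrow> 'a)" shows "d 1 = 0"
proof -
  have "d (1 * 1) = 1 * d 1 + 1 * d 1" using assms unfolding is_K_derivation_def by blast
  thus ?thesis by (metis add.right_neutral add_left_cancel mult_1)
qed

lemma KD_sum: assumes "is_K_derivation K d" shows "d (sum f A) = (\<Sum>x\<in>A. d (f x))"
  using assms
  by (induction A rule: infinite_finite_induct) (auto simp: KD_zero is_K_derivation_def)

lemma coeff_Dp: assumes "is_K_derivation K d" shows "coeff (Dp d p) n = d (coeff p n)"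
  unfolding Dp_def using KD_zero[OF assms] by (simp add: coeff_map_poly)

lemma der_Dp: assumes "is_K_derivation K d" shows "der (Dp d)"
  unfolding der_def
proof (intro conjI allI)
  fix x y
  show "Dp d (x + y) = Dp d x + Dp d y"
    by (rule poly_eqI) (use assms in \<open>simp add: coeff_Dp[OF assms] is_K_derivation_def\<close>)
  show "Dp d (x * y) = x * Dp d y + y * Dp d x"
  proof (rule poly_eqI)
    fix n
    have "coeff (Dp d (x * y)) n = (\<Sum>i\<le>n. d (coeff x i * coeff y (n-i)))"
      by (simp add: coeff_Dp[OF assms] coeff_mult KD_sum[OF assms])
    also have "\<dots> = (\<Sum>i\<le>n. coeff x i * d (coeff y (n-i))) + (\<Sum>i\<le>n. d (coeff x i) * coeff y (n-i))"
      using assms by (simp add: is_K_derivation_def sum.distrib mult.commute)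
    also have "\<dots> = coeff (x * Dp d y + y * Dp d x) n"
      by (simp add: coeff_mult coeff_Dp[OF assms] mult.commute[of y])
    finally show "coeff (Dp d (x * y)) n = coeff (x * Dp d y + y * Dp d x) n" .
  qed
qed

lemma KD_of_nat: assumes "is_K_derivation K d" shows "d (of_nat m * x) = of_nat m * d x"
  using assms by (induction m) (auto simp: KD_zero is_K_derivation_def algebra_simps)

lemma Dp_pderiv: assumes "is_K_derivation K d" shows "Dp d (pderiv f) = pderiv (Dp d f)"
  by (rule poly_eqI) (simp only: coeff_Dp[OF assms] coeff_pderiv KD_of_nat[OF assms])

lemma Dp_smult: assumes "is_K_derivation K d" "c \<in> K" shows "Dp d (smult c f) = smult c (Dp d f)"
proof -
  have h: "d (c * x) = c * d x" for x using assms unfolding is_K_derivation_def by blast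
  show ?thesis by (rule poly_eqI) (simp only: coeff_Dp[OF assms(1)] coeff_smult h)
qed

lemma Br_poisson: assumes "is_K_derivation K d" shows "is_poisson_bracket K (Br d)"
proof -
  have X: "der (pderiv :: 'a poly \<Rightarrow> _)" by (rule der_pderiv)
  have Y: "der (Dp d)" by (rule der_Dp[OF assms])
  have a: "pderiv (f + g) = pderiv f + pderiv g" "pderiv (f * g) = f * pderiv g + g * pderiv f"
          "Dp d (f + g) = Dp d f + Dp d g" "Dp d (f * g) = f * Dp d g + g * Dp d f" for f g :: "'a poly"
    using X Y unfolding der_def by auto
  show ?thesis unfolding is_poisson_bracket_def
  proof (intro conjI allI ballI)
    fix x y z :: "'a poly"
    show "Br d (x + y) z = Br d x z + Br d y z" by (simp add: Br_def a algebra_simps)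
    show "Br d x (y + z) = Br d x y + Br d x z" by (simp add: Br_def a algebra_simps)
    show "Br d x x = 0" by (simp add: Br_def mult.commute)
    show "Br d x (Br d y z) + Br d y (Br d z x) + Br d z (Br d x y) = 0"
      by (rule jacobi[OF X Y]) (auto simp: Br_def Dp_pderiv[OF assms])
    show "Br d (x * y) z = x * Br d y z + y * Br d x z" by (simp add: Br_def a algebra_simps)
  next
    fix c x y assume "c \<in> K"
    thus "Br d (smult c x) y = smult c (Br d x y)"
      by (simp add: Br_def Dp_smult[OF assms] pderiv_smult smult_diff_right)
  next
    fix c x y assume "c \<in> K"
    thus "Br d x (smult c y) = smult c (Br d x y)"
      by (simp add: Br_def Dp_smult[OF assms] pderiv_smult smult_diff_right)
  qed
qed


lemma deg_eq:
  fixes a b :: "'a::{idom,ring_char_0} poly"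
  assumes "a \<noteq> 0" "b \<noteq> 0" "pderiv a * b = a * pderiv b"
  shows "degree a = degree b"
proof (cases "degree a = 0 \<or> degree b = 0")
  case True
  thus ?thesis
  proof
    assume "degree a = 0"
    hence "pderiv a = 0" by (simp add: pderiv_eq_0_iff)
    hence "pderiv b = 0" using assms by simp
    thus ?thesis using \<open>degree a = 0\<close> by (simp add: pderiv_eq_0_iff)
  next
    assume "degree b = 0"
    hence "pderiv b = 0" by (simp add: pderiv_eq_0_iff)
    hence "pderiv a = 0" using assms by simp
    thus ?thesis using \<open>degree b = 0\<close> by (simp add: pderiv_eq_0_iff)
  qed
next
  case False
  define n m where "n = degree a" "m = degree b"
  have dn: "degree (pderiv a) = n - 1" "degree (pderiv b) = m - 1" by (simp_all add: degree_pderiv n_m_def)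
  have la: "lead_coeff (pderiv a) = of_nat n * lead_coeff a"
    using False by (simp add: dn coeff_pderiv n_m_def)
  have lb: "lead_coeff (pderiv b) = of_nat m * lead_coeff b"
    using False by (simp add: dn coeff_pderiv n_m_def)
  have "coeff (pderiv a * b) (degree (pderiv a) + degree b) = of_nat n * lead_coeff a * lead_coeff b"
    by (simp add: coeff_mult_degree_sum la)
  moreover have "coeff (a * pderiv b) (degree a + degree (pderiv b)) = lead_coeff a * (of_nat m * lead_coeff b)"
    by (simp add: coeff_mult_degree_sum lb)
  moreover have "degree (pderiv a) + degree b = degree a + degree (pderiv b)"
    using False dn n_m_def by simp
  ultimately have "n = m"
    using assms by (auto simp: algebra_simps)
  thus ?thesis using n_m_def by simp
qed

lemma const_ratio:
  fixes a b :: "'a::{idom,ring_char_0} poly"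
  assumes "b \<noteq> 0" "pderiv a * b = a * pderiv b"
  shows "\<exists>a0 b0. b0 \<noteq> 0 \<and> Fract a b = Fract [:a0:] [:b0:]"
proof (cases "a = 0")
  case True
  thus ?thesis using assms by (intro exI[of _ 0] exI[of _ 1]) (simp add: eq_fract)
next
  case False
  define c where "c = smult (lead_coeff b) a - smult (lead_coeff a) b"
  have deq: "degree a = degree b" using deg_eq[OF False assms] .
  have "c = 0"
  proof (rule ccontr)
    assume c0: "c \<noteq> 0"
    have "pderiv c * b = c * pderiv b"
      unfolding c_def using assms(2) by (simp add: pderiv_diff pderiv_smult algebra_simps)
    hence dc: "degree c = degree b" using deg_eq[OF c0 assms(1)] by simp
    have "degree c \<le> degree b" unfolding c_def using deq
      by (intro degree_diff_le) (auto intro: order_trans[OF degree_smult_le])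
    moreover have "coeff c (degree b) = 0" unfolding c_def using deq by simp
    ultimately show False using dc c0 by (metis leading_coeff_0_iff)
  qed
  hence "smult (lead_coeff b) a = smult (lead_coeff a) b" unfolding c_def by simp
  hence "a * [:lead_coeff b:] = [:lead_coeff a:] * b" by (simp add: mult.commute)
  thus ?thesis using assms False by (intro exI[of _ "lead_coeff a"] exI[of _ "lead_coeff b"]) (simp add: eq_fract)
qed

lemma frac_embed_Fract:
  fixes a b :: "'a::idom"
  assumes "b \<noteq> 0" shows "frac_embed (Fract a b) = Fract [:a:] [:b:]"
  unfolding frac_embed_def
proof (rule someI2_ex)
  show "\<exists>v a' b'. b' \<noteq> 0 \<and> Fract a b = Fract a' b' \<and> v = Fract [:a':] [:b':]" using assms by blast
next
  fix v assume "\<exists>a' b'. b' \<noteq> 0 \<and> Fract a b = Fract a' b' \<and> v = Fract [:a':] [:b':]"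
  then obtain a' b' where h: "b' \<noteq> 0" "Fract a b = Fract a' b'" "v = Fract [:a':] [:b':]" by blast
  hence "a * b' = a' * b" using assms by (simp add: eq_fract)
  hence "[:a:] * [:b':] = [:a':] * [:b:]" by simp (metis mult.commute)
  thus "v = Fract [:a:] [:b:]" using h assms by (simp add: eq_fract)
qed


lemma der_K: "is_K_derivation K d \<Longrightarrow> der d"
  unfolding der_def is_K_derivation_def by blast

lemma Dp_const: assumes "is_K_derivation K d" shows "Dp d [:c:] = [:d c:]"
  by (rule poly_eqI) (simp add: coeff_Dp[OF assms] coeff_pCons KD_zero[OF assms] split: nat.split)

lemma Dp_X: assumes "is_K_derivation K d" shows "Dp d [:0,1:] = 0"
  by (rule poly_eqI) (simp add: coeff_Dp[OF assms] coeff_pCons KD_zero[OF assms] KD_one[OF assms] split: nat.split)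

lemma Fract_eq0: "b \<noteq> 0 \<Longrightarrow> Fract a b = 0 \<longleftrightarrow> a = 0"
  by (simp add: Zero_fract_def eq_fract)

lemma centre:
  fixes d :: "'a::{idom,ring_char_0} \<Rightarrow> 'a"
  assumes K: "is_K_derivation K d" and nz: "d x \<noteq> 0"
  shows "poisson_centre (Br d) = frac_embed ` {f. frac_deriv d f = 0}"
proof -
  have X: "der (pderiv :: 'a poly \<Rightarrow> _)" by (rule der_pderiv)
  have Y: "der (Dp d)" by (rule der_Dp[OF K])
  have FB: "frac_bracket (Br d) z w = frac_deriv pderiv z * frac_deriv (Dp d) w - frac_deriv (Dp d) z * frac_deriv pderiv w" for z w
    by (rule frac_bracket_eq[OF X Y]) (simp add: Br_def)
  have d1: "Dp d 1 = 0" using Dp_const[OF K, of 1] KD_one[OF K] by (simp add: one_pCons)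
  have dX: "Dp d (pCons 0 1) = 0" using Dp_X[OF K] by (simp add: one_pCons)
  show ?thesis
  proof (rule set_eqI iffI)+
    fix z assume "z \<in> poisson_centre (Br d)"
    hence zc: "\<And>w. frac_bracket (Br d) z w = 0" unfolding poisson_centre_def by blast
    obtain a b where z: "z = Fract a b" "b \<noteq> 0" by (cases z)
    have "frac_bracket (Br d) z (Fract [:0,1:] 1) = - frac_deriv (Dp d) z"
      by (simp add: FB frac_deriv_Fract[OF X] frac_deriv_Fract[OF Y] dX d1 pderiv_pCons flip: Zero_fract_def One_fract_def one_pCons)
    hence FD: "frac_deriv (Dp d) z = 0" using zc by simp
    have "frac_bracket (Br d) z (Fract [:x:] 1) = frac_deriv pderiv z * Fract [:d x:] 1"
      by (simp add: FB frac_deriv_Fract[OF X] frac_deriv_Fract[OF Y] Dp_const[OF K] d1 flip: Zero_fract_def)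
    hence "frac_deriv pderiv z = 0" using zc nz by (simp add: Fract_eq0)
    hence "pderiv a * b = a * pderiv b" using z by (simp add: frac_deriv_Fract[OF X] Fract_eq0)
    then obtain a0 b0 where ab: "b0 \<noteq> 0" "z = Fract [:a0:] [:b0:]" using const_ratio z by metis
    have "Fract ([:d a0:] * [:b0:] - [:a0:] * [:d b0:]) ([:b0:]^2) = 0"
      using FD ab by (simp add: frac_deriv_Fract[OF Y] Dp_const[OF K])
    hence e: "d a0 * b0 - a0 * d b0 = 0" using ab by (simp add: Fract_eq0) (metis mult.commute)
    have "frac_deriv d (Fract a0 b0) = 0" using e ab by (simp add: frac_deriv_Fract[OF der_K[OF K]] Fract_eq0)
    moreover have "z = frac_embed (Fract a0 b0)" using ab by (simp add: frac_embed_Fract)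
    ultimately show "z \<in> frac_embed ` {f. frac_deriv d f = 0}" by blast
  next
    fix z assume "z \<in> frac_embed ` {f. frac_deriv d f = 0}"
    then obtain f where f: "frac_deriv d f = 0" "z = frac_embed f" by blast
    obtain a0 b0 where ab: "f = Fract a0 b0" "b0 \<noteq> 0" by (cases f)
    have e: "d a0 * b0 - a0 * d b0 = 0" using f ab by (simp add: frac_deriv_Fract[OF der_K[OF K]] Fract_eq0)
    have zz: "z = Fract [:a0:] [:b0:]" using f ab by (simp add: frac_embed_Fract)
    have "frac_deriv pderiv z = 0" using ab zz by (simp add: frac_deriv_Fract[OF X] Fract_eq0)
    moreover have "frac_deriv (Dp d) z = 0"
    proof -
      have "[:d a0:] * [:b0:] - [:a0:] * [:d b0:] = [:d a0 * b0 - a0 * d b0:]" by simp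
      thus ?thesis using ab zz e by (simp add: frac_deriv_Fract[OF Y] Dp_const[OF K] Fract_eq0)
    qed
    ultimately show "z \<in> poisson_centre (Br d)" unfolding poisson_centre_def by (simp add: FB)
  qed
qed


lemma ideal_sum: assumes "is_ideal I" "\<And>x. x \<in> A \<Longrightarrow> f x \<in> I" shows "sum f A \<in> I"
  using assms(2)
proof (induction A rule: infinite_finite_induct)
  case (infinite A) thus ?case using assms(1) by (simp add: is_ideal_def)
next
  case empty thus ?case using assms(1) by (simp add: is_ideal_def)
next
  case (insert x F) thus ?case using assms(1) by (simp add: is_ideal_def)
qed

lemma ideal_multr: "is_ideal I \<Longrightarrow> x \<in> I \<Longrightarrow> x * r \<in> I"
  unfolding is_ideal_def by (metis mult.commute)

lemma ideal_diff: assumes "is_ideal I" "x \<in> I" "y \<in> I" shows "x - y \<in> I"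
proof -
  have "(-1) * y \<in> I" using assms unfolding is_ideal_def by blast
  thus ?thesis using assms unfolding is_ideal_def by (metis diff_conv_add_uminus mult_minus1)
qed

definition PQ :: "'a::comm_ring_1 set \<Rightarrow> 'a poly set" where
  "PQ P = {p. \<forall>i. coeff p i \<in> P}"

lemma PQ_ideal: assumes "is_ideal P" shows "is_ideal (PQ P)"
  unfolding is_ideal_def PQ_def
proof (intro conjI ballI allI; clarsimp)
  show "\<And>i. 0 \<in> P" using assms by (simp add: is_ideal_def)
  show "\<And>x y i. \<forall>i. coeff x i \<in> P \<Longrightarrow> \<forall>i. coeff y i \<in> P \<Longrightarrow> coeff x i + coeff y i \<in> P"
    using assms by (simp add: is_ideal_def)
  fix x r i assume "\<forall>i. coeff x i \<in> P"
  thus "coeff (r * x) i \<in> P"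
    unfolding coeff_mult using assms by (intro ideal_sum) (auto simp: is_ideal_def)
qed

lemma ext_ideal_PQ: assumes "is_ideal P" shows "ext_ideal P = PQ P"
proof
  have "(\<lambda>a. [:a:]) ` P \<subseteq> PQ P"
    using assms by (auto simp: PQ_def coeff_pCons is_ideal_def split: nat.split)
  thus "ext_ideal P \<subseteq> PQ P" unfolding ext_ideal_def ideal_generated_def
    using PQ_ideal[OF assms] by blast
next
  show "PQ P \<subseteq> ext_ideal P" unfolding ext_ideal_def ideal_generated_def
  proof (intro subsetI InterI; clarsimp)
    fix p I assume p: "p \<in> PQ P" and I: "is_ideal I" "(\<lambda>a. [:a:]) ` P \<subseteq> I"
    have "p = (\<Sum>i\<le>degree p. monom 1 i * [:coeff p i:])"
      by (subst poly_as_sum_of_monoms[symmetric]) (simp add: mult.commute smult_monom)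
    also have "\<dots> \<in> I"
    proof (rule ideal_sum[OF I(1)])
      fix i
      have "[:coeff p i:] \<in> I" using p I by (auto simp: PQ_def)
      thus "monom 1 i * [:coeff p i:] \<in> I" using I(1) unfolding is_ideal_def by blast
    qed
    finally show "p \<in> I" .
  qed
qed

lemma PQ_prime: assumes "is_prime_ideal P" shows "is_prime_ideal (PQ P)"
proof -
  have iP: "is_ideal P" using assms by (simp add: is_prime_ideal_def)
  have "1 \<notin> P"
  proof
    assume "1 \<in> P"
    hence "\<forall>r. r \<in> P" using iP unfolding is_ideal_def by (metis mult_1_right)
    thus False using assms by (auto simp: is_prime_ideal_def)
  qed
  have ne: "PQ P \<noteq> UNIV"
  proof
    assume "PQ P = UNIV"
    hence "(1::'a poly) \<in> PQ P" by simp
    hence "coeff (1::'a poly) 0 \<in> P" unfolding PQ_def by blast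
    thus False using \<open>1 \<notin> P\<close> by simp
  qed
  have pr: "p \<in> PQ P \<or> q \<in> PQ P" if pq: "p * q \<in> PQ P" for p q
  proof (rule ccontr)
    assume "\<not> (p \<in> PQ P \<or> q \<in> PQ P)"
    then obtain i0 j0 where "coeff p i0 \<notin> P" "coeff q j0 \<notin> P" unfolding PQ_def by auto
    define i where "i = (LEAST i. coeff p i \<notin> P)"
    define j where "j = (LEAST j. coeff q j \<notin> P)"
    have ci: "coeff p i \<notin> P" unfolding i_def by (rule LeastI) fact
    have cj: "coeff q j \<notin> P" unfolding j_def by (rule LeastI) fact
    have bi: "k < i \<Longrightarrow> coeff p k \<in> P" for k unfolding i_def using not_less_Least by blast
    have bj: "k < j \<Longrightarrow> coeff q k \<in> P" for k unfolding j_def using not_less_Least by blast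
    have tot: "coeff (p * q) (i + j) \<in> P" using pq by (simp add: PQ_def)
    have split: "coeff (p * q) (i + j) = coeff p i * coeff q j +
         (\<Sum>k\<in>{..i+j} - {i}. coeff p k * coeff q (i + j - k))"
      unfolding coeff_mult by (subst sum.remove[of _ i]) auto
    have rest: "(\<Sum>k\<in>{..i+j} - {i}. coeff p k * coeff q (i + j - k)) \<in> P"
    proof (rule ideal_sum[OF iP])
      fix k assume k: "k \<in> {..i+j} - {i}"
      show "coeff p k * coeff q (i + j - k) \<in> P"
      proof (cases "k < i")
        case True thus ?thesis using bi ideal_multr[OF iP] by blast
      next
        case False
        hence "i + j - k < j" using k by auto
        thus ?thesis using bj iP unfolding is_ideal_def by blast
      qed
    qed
    have "coeff p i * coeff q j \<in> P"
      using ideal_diff[OF iP tot rest] split by simp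
    thus False using assms ci cj unfolding is_prime_ideal_def by blast
  qed
  show ?thesis using PQ_ideal[OF iP] ne pr unfolding is_prime_ideal_def by blast
qed

lemma PQ_poisson:
  assumes K: "is_K_derivation K d" and P: "is_prime_ideal P" "d ` P \<subseteq> P"
  shows "is_poisson_prime (Br d) (ext_ideal P)"
proof -
  have iP: "is_ideal P" using P by (simp add: is_prime_ideal_def)
  have iQ: "is_ideal (PQ P)" by (rule PQ_ideal[OF iP])
  have "Br d q r \<in> PQ P" if q: "q \<in> PQ P" for q r
  proof -
    have "pderiv q \<in> PQ P" using q iP unfolding PQ_def is_ideal_def by (simp add: coeff_pderiv)
    moreover have "Dp d q \<in> PQ P" using q P unfolding PQ_def by (auto simp: coeff_Dp[OF K])
    ultimately show ?thesis unfolding Br_def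
      using iQ by (intro ideal_diff[OF iQ]) (auto simp: is_ideal_def ideal_multr)
  qed
  thus ?thesis unfolding is_poisson_prime_def ext_ideal_PQ[OF iP] using PQ_prime[OF P(1)] by blast
qed

theorem proposition5p2:
  fixes K :: "'a::{idom, ring_char_0} set" and \<delta> :: "'a \<Rightarrow> 'a"
  assumes "is_subfield K"
    and "is_K_derivation K \<delta>"
    and "\<exists>x. \<delta> x \<noteq> 0"
  shows "\<exists>B. is_poisson_bracket K B \<and>
           poisson_centre B = frac_embed ` {f. frac_deriv \<delta> f = 0} \<and>
           (\<forall>P. is_prime_ideal P \<and> \<delta> ` P \<subseteq> P \<longrightarrow> is_poisson_prime B (ext_ideal P))"
proof -
  obtain x where "\<delta> x \<noteq> 0" using assms(3) by blast
  thus ?thesis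
    using Br_poisson[OF assms(2)] centre[OF assms(2)] PQ_poisson[OF assms(2)] by blast
qed

end
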